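(* Let $m\ge1$ be an integer, let $G_0$ be a regular conditional distribution of $X_0$ given $\{X_i:0<|i|\le m\}$ (also written as a distribution function $G_0(y)$), and suppose there exist a set $A\in\mathcal F$ with $P(A)>0$ and real numbers $\varepsilon\in(0,1/2)$, $a\le\xi_p\le b$ such that for all $\omega\in A$, $G_0((a-\varepsilon,a])>\varepsilon$ and $G_0((b,b+\varepsilon])>\varepsilon$. Then $P(G_0(\xi_p)=1)<p$.
   Context: $\{X_i\}_{i\in\mathbb{Z}}$ is a strictly stationary real sequence on $(\Omega,\mathcal F,P)$ with marginal distribution function $F$; $p\in(0,1)$, $\xi_p=\inf\{x:F(x)\ge p\}$, and $F(\xi_p)=p$ (e.g. $F$ continuous at $\xi_p$). *)

theory Defs
  imports "HOL-Probability.Probability"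
begin

definition strictly_stationary :: "'a measure \<Rightarrow> (int \<Rightarrow> 'a \<Rightarrow> real) \<Rightarrow> bool" where
  "strictly_stationary M X \<longleftrightarrow>
     (\<forall>J k. finite J \<longrightarrow>
        distr M (PiM J (\<lambda>_. borel)) (\<lambda>\<omega>. \<lambda>i\<in>J. X (i + k) \<omega>) =
        distr M (PiM J (\<lambda>_. borel)) (\<lambda>\<omega>. \<lambda>i\<in>J. X i \<omega>))"

definition marg_cdf :: "'a measure \<Rightarrow> (int \<Rightarrow> 'a \<Rightarrow> real) \<Rightarrow> real \<Rightarrow> real" where
  "marg_cdf M X x = measure M {\<omega> \<in> space M. X 0 \<omega> \<le> x}"

definition quantile :: "(real \<Rightarrow> real) \<Rightarrow> real \<Rightarrow> real" where
  "quantile F p = Inf {x. F x \<ge> p}"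

definition gen_sigma :: "'a measure \<Rightarrow> (int \<Rightarrow> 'a \<Rightarrow> real) \<Rightarrow> int set \<Rightarrow> 'a measure" where
  "gen_sigma M X J = vimage_algebra (space M) (\<lambda>\<omega>. \<lambda>i\<in>J. X i \<omega>) (PiM J (\<lambda>_. borel))"

definition reg_cond_dist :: "'a measure \<Rightarrow> ('a \<Rightarrow> real) \<Rightarrow> 'a measure \<Rightarrow> ('a \<Rightarrow> real measure) \<Rightarrow> bool" where
  "reg_cond_dist M Y N K \<longleftrightarrow>
     (\<forall>\<omega>\<in>space M. prob_space (K \<omega>) \<and> sets (K \<omega>) = sets borel) \<and>
     (\<forall>B\<in>sets borel.
        (\<lambda>\<omega>. measure (K \<omega>) B) \<in> borel_measurable N \<and>
        (\<forall>C\<in>sets N. (LINT \<omega>:C|M. measure (K \<omega>) B) = measure M (C \<inter> {\<omega>\<in>space M. Y \<omega> \<in> B})))"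

end

theory Submission
  imports Defs
begin

theorem mainTheorem5:
  fixes M :: "'a measure" and X :: "int \<Rightarrow> 'a \<Rightarrow> real" and p :: real
    and m :: nat and K :: "'a \<Rightarrow> real measure" and A :: "'a set"
    and \<epsilon> a b :: real
  assumes "prob_space M"
    and "\<And>i. X i \<in> borel_measurable M"
    and "strictly_stationary M X"
    and "0 < p" and "p < 1"
    and "marg_cdf M X (quantile (marg_cdf M X) p) = p"
    and "m \<ge> 1"
    and "reg_cond_dist M (X 0) (gen_sigma M X {i. 0 < \<bar>i\<bar> \<and> \<bar>i\<bar> \<le> int m}) K"
    and "A \<in> sets M" and "measure M A > 0"
    and "0 < \<epsilon>" and "\<epsilon> < 1/2"
    and "a \<le> quantile (marg_cdf M X) p" and "quantile (marg_cdf M X) p \<le> b"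
    and "\<forall>\<omega>\<in>A. measure (K \<omega>) {a - \<epsilon><..a} > \<epsilon> \<and> measure (K \<omega>) {b<..b + \<epsilon>} > \<epsilon>"
  shows "measure M {\<omega>\<in>space M. measure (K \<omega>) {..quantile (marg_cdf M X) p} = 1} < p"
proof -
  interpret P: prob_space M by fact
  define \<xi> where "\<xi> = quantile (marg_cdf M X) p"
  define J where "J = {i. 0 < \<bar>i\<bar> \<and> \<bar>i\<bar> \<le> int m}"
  define N where "N = gen_sigma M X J"
  define g where "g = (\<lambda>\<omega>. measure (K \<omega>) {..\<xi>})"
  define S where "S = {\<omega>\<in>space M. g \<omega> = 1}"
  have rc: "reg_cond_dist M (X 0) N K" using assms(8) unfolding N_def J_def .
  have Kp: "\<And>\<omega>. \<omega> \<in> space M \<Longrightarrow> prob_space (K \<omega>) \<and> sets (K \<omega>) = sets borel"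
    using rc unfolding reg_cond_dist_def by blast
  have fm: "(\<lambda>\<omega>. \<lambda>i\<in>J. X i \<omega>) \<in> measurable M (PiM J (\<lambda>_. borel))"
    using assms(2) by (intro measurable_restrict) auto
  have sub: "subalgebra M N"
    unfolding subalgebra_def N_def gen_sigma_def
  proof
    show "space (vimage_algebra (space M) (\<lambda>\<omega>. \<lambda>i\<in>J. X i \<omega>) (Pi\<^sub>M J (\<lambda>_. borel))) = space M"
      by simp
    show "sets (vimage_algebra (space M) (\<lambda>\<omega>. \<lambda>i\<in>J. X i \<omega>) (Pi\<^sub>M J (\<lambda>_. borel))) \<subseteq> sets M"
      unfolding sets_vimage_algebra
      by (rule sets.sigma_sets_subset) (use fm measurable_sets in blast)
  qed
  have spN: "space M \<in> sets N" using sub unfolding subalgebra_def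
    by (metis sets.top)
  have gN: "g \<in> borel_measurable N" using rc unfolding reg_cond_dist_def g_def by auto
  have gM: "g \<in> borel_measurable M" by (rule measurable_from_subalg[OF sub gN])
  have gint: "(LINT \<omega>:space M|M. g \<omega>) = measure M (space M \<inter> {\<omega>\<in>space M. X 0 \<omega> \<in> {..\<xi>}})"
    using rc spN unfolding reg_cond_dist_def g_def by auto
  have "measure M (space M \<inter> {\<omega>\<in>space M. X 0 \<omega> \<in> {..\<xi>}}) = p"
    using assms(6) unfolding marg_cdf_def \<xi>_def[symmetric] by (simp add: Int_absorb1 cong: conj_cong)
  moreover have "(LINT \<omega>:space M|M. g \<omega>) = integral\<^sup>L M g"
    by (simp add: set_lebesgue_integral_def indicator_def cong: Bochner_Integration.integral_cong)
  ultimately have intg: "integral\<^sup>L M g = p" using gint by simp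
  have g01: "\<And>\<omega>. \<omega> \<in> space M \<Longrightarrow> 0 \<le> g \<omega> \<and> g \<omega> \<le> 1"
    using Kp unfolding g_def by (simp add: prob_space.prob_le_1)
  have Asp: "A \<subseteq> space M" using assms(9) sets.sets_into_space by blast
  have onA: "\<And>\<omega>. \<omega> \<in> A \<Longrightarrow> \<epsilon> < g \<omega> \<and> g \<omega> < 1"
  proof -
    fix \<omega> assume w: "\<omega> \<in> A"
    then have ws: "\<omega> \<in> space M" using Asp by blast
    interpret Q: prob_space "K \<omega>" using Kp[OF ws] by blast
    have sK: "sets (K \<omega>) = sets borel" using Kp[OF ws] by blast
    have h: "measure (K \<omega>) {a - \<epsilon><..a} > \<epsilon>" "measure (K \<omega>) {b<..b + \<epsilon>} > \<epsilon>"
      using assms(15) w by auto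
    have "measure (K \<omega>) {a - \<epsilon><..a} \<le> g \<omega>"
      unfolding g_def using assms(13) \<xi>_def
      by (intro Q.finite_measure_mono) (auto simp: sK)
    moreover have "g \<omega> + measure (K \<omega>) {b<..b + \<epsilon>} \<le> 1"
    proof -
      have "g \<omega> + measure (K \<omega>) {b<..b + \<epsilon>} = measure (K \<omega>) ({..\<xi>} \<union> {b<..b + \<epsilon>})"
        unfolding g_def using assms(14) \<xi>_def
        by (intro Q.finite_measure_Union[symmetric]) (auto simp: sK)
      also have "\<dots> \<le> 1" by (rule Q.prob_le_1)
      finally show ?thesis .
    qed
    ultimately show "\<epsilon> < g \<omega> \<and> g \<omega> < 1" using h assms(11) by linarith
  qed
  have Sm: "S \<in> sets M" unfolding S_def using gM by measurable
  have pw: "\<And>\<omega>. \<omega> \<in> space M \<Longrightarrow> indicator S \<omega> + \<epsilon> * indicator A \<omega> \<le> g \<omega>"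
  proof -
    fix \<omega> assume ws: "\<omega> \<in> space M"
    show "indicator S \<omega> + \<epsilon> * indicator A \<omega> \<le> g \<omega>"
    proof (cases "\<omega> \<in> A")
      case True
      then have "\<omega> \<notin> S" using onA unfolding S_def by fastforce
      then show ?thesis using True onA[OF True] by (simp add: indicator_def)
    next
      case False
      then show ?thesis using g01[OF ws] by (auto simp: indicator_def S_def)
    qed
  qed
  have intS: "integrable M (indicator S :: 'a \<Rightarrow> real)" using Sm by (intro integrable_real_indicator) (auto simp: P.emeasure_finite less_top[symmetric])
  have intA: "integrable M (indicator A :: 'a \<Rightarrow> real)" using assms(9) by (intro integrable_real_indicator) (auto simp: P.emeasure_finite less_top[symmetric])
  have gi: "integrable M g"
    by (rule P.integrable_const_bound[where B=1]) (use g01 gM in auto)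
  have "integral\<^sup>L M (\<lambda>\<omega>. indicator S \<omega> + \<epsilon> * indicator A \<omega>) \<le> integral\<^sup>L M g"
    by (rule integral_mono) (use intS intA gi pw in auto)
  moreover have "integral\<^sup>L M (\<lambda>\<omega>. indicator S \<omega> + \<epsilon> * indicator A \<omega>) = measure M S + \<epsilon> * measure M A"
    using intS intA Sm assms(9) by simp
  ultimately have "measure M S + \<epsilon> * measure M A \<le> p" using intg by simp
  moreover have "\<epsilon> * measure M A > 0" using assms(10,11) by simp
  ultimately have "measure M S < p" by linarith
  then show ?thesis unfolding S_def g_def \<xi>_def .
qed

end
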